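(* Let $\mathcal{A}$ be a unital C*-algebra and $X$ a Hilbert $\mathcal{A}$-bimodule, full and finite projective as a right $\mathcal{A}$-module, with finite basis $\{u_1,\dots,u_n\}$, and let $\sigma:\mathcal{O}_X\to\mathcal{O}_X$, $\sigma(T)=\sum_iu_iTu_i^*$. Then the restriction of $\sigma$ to $\mathcal{A}'\cap\mathcal{O}_X$ is a unital injective $*$-homomorphism, and this restriction does not depend on the choice of the basis of $X_{\mathcal{A}}$.
   Context: A Hilbert $\mathcal{A}$-bimodule is a right Hilbert $\mathcal{A}$-module $X$ (inner product $(\cdot|\cdot)_{\mathcal{A}}$) with an injective $*$-homomorphism $\phi:\mathcal{A}\to\mathcal{L}_{\mathcal{A}}(X_{\mathcal{A}})$. A basis is a finite set $\{u_i\}\subset X$ with $x=\sum_iu_i(u_i|x)_{\mathcal{A}}$ for all $x\in X$. $\mathcal{O}_X$ is the universal C*-algebra generated by a unital copy of $\mathcal{A}$ and elements $S_x$ ($x\in X$, linear in $x$) with $S_{xa}=S_xa$, $S_{\phi(a)x}=aS_x$, $S_x^*S_y=(x|y)_{\mathcal{A}}$, $\sum_iS_{u_i}S_{u_i}^*=I$; write $x$ for $S_x$. $\mathcal{A}'$ is the commutant of $\mathcal{A}$ in $\mathcal{O}_X$. *)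

theory Defs
  imports Complex_Main
begin

record 'a calg =
  ca_carrier :: "'a set"
  ca_zero :: 'a
  ca_one :: 'a
  ca_add :: "'a \<Rightarrow> 'a \<Rightarrow> 'a"
  ca_mult :: "'a \<Rightarrow> 'a \<Rightarrow> 'a"
  ca_smult :: "complex \<Rightarrow> 'a \<Rightarrow> 'a"
  ca_star :: "'a \<Rightarrow> 'a"
  ca_norm :: "'a \<Rightarrow> real"

definition ca_diff :: "'a calg \<Rightarrow> 'a \<Rightarrow> 'a \<Rightarrow> 'a" where
  "ca_diff C x y = ca_add C x (ca_smult C (-1) y)"

definition ca_sum :: "'a calg \<Rightarrow> 'a list \<Rightarrow> 'a" where
  "ca_sum C xs = foldr (ca_add C) xs (ca_zero C)"

definition unital_cstar_algebra :: "'a calg \<Rightarrow> bool" where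
  "unital_cstar_algebra C \<longleftrightarrow>
     (let K = ca_carrier C; add = ca_add C; mul = ca_mult C; sm = ca_smult C;
          st = ca_star C; nm = ca_norm C; z = ca_zero C; e = ca_one C in
     z \<in> K \<and> e \<in> K \<and>
     (\<forall>x\<in>K. \<forall>y\<in>K. add x y \<in> K \<and> mul x y \<in> K) \<and>
     (\<forall>c. \<forall>x\<in>K. sm c x \<in> K) \<and> (\<forall>x\<in>K. st x \<in> K) \<and>
     \<comment> \<open>complex vector space\<close>
     (\<forall>x\<in>K. \<forall>y\<in>K. \<forall>w\<in>K. add (add x y) w = add x (add y w)) \<and>
     (\<forall>x\<in>K. \<forall>y\<in>K. add x y = add y x) \<and>
     (\<forall>x\<in>K. add z x = x) \<and>
     (\<forall>x\<in>K. add x (sm (-1) x) = z) \<and>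
     (\<forall>c d. \<forall>x\<in>K. sm (c + d) x = add (sm c x) (sm d x)) \<and>
     (\<forall>c. \<forall>x\<in>K. \<forall>y\<in>K. sm c (add x y) = add (sm c x) (sm c y)) \<and>
     (\<forall>c d. \<forall>x\<in>K. sm (c * d) x = sm c (sm d x)) \<and>
     (\<forall>x\<in>K. sm 1 x = x) \<and>
     \<comment> \<open>associative unital algebra\<close>
     (\<forall>x\<in>K. \<forall>y\<in>K. \<forall>w\<in>K. mul (mul x y) w = mul x (mul y w)) \<and>
     (\<forall>x\<in>K. \<forall>y\<in>K. \<forall>w\<in>K. mul x (add y w) = add (mul x y) (mul x w)) \<and>
     (\<forall>x\<in>K. \<forall>y\<in>K. \<forall>w\<in>K. mul (add x y) w = add (mul x w) (mul y w)) \<and>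
     (\<forall>c. \<forall>x\<in>K. \<forall>y\<in>K. mul (sm c x) y = sm c (mul x y) \<and> mul x (sm c y) = sm c (mul x y)) \<and>
     (\<forall>x\<in>K. mul e x = x \<and> mul x e = x) \<and>
     \<comment> \<open>involution\<close>
     (\<forall>x\<in>K. st (st x) = x) \<and>
     (\<forall>x\<in>K. \<forall>y\<in>K. st (add x y) = add (st x) (st y)) \<and>
     (\<forall>c. \<forall>x\<in>K. st (sm c x) = sm (cnj c) (st x)) \<and>
     (\<forall>x\<in>K. \<forall>y\<in>K. st (mul x y) = mul (st y) (st x)) \<and>
     \<comment> \<open>submultiplicative norm, C*-identity\<close>
     (\<forall>x\<in>K. nm x \<ge> 0 \<and> (nm x = 0 \<longleftrightarrow> x = z)) \<and>
     (\<forall>x\<in>K. \<forall>y\<in>K. nm (add x y) \<le> nm x + nm y) \<and>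
     (\<forall>c. \<forall>x\<in>K. nm (sm c x) = cmod c * nm x) \<and>
     (\<forall>x\<in>K. \<forall>y\<in>K. nm (mul x y) \<le> nm x * nm y) \<and>
     (\<forall>x\<in>K. nm (mul (st x) x) = (nm x)\<^sup>2) \<and>
     \<comment> \<open>completeness\<close>
     (\<forall>f :: nat \<Rightarrow> _. (\<forall>n. f n \<in> K) \<and> (\<forall>\<epsilon>>0. \<exists>N. \<forall>m\<ge>N. \<forall>n\<ge>N. nm (ca_diff C (f m) (f n)) < \<epsilon>)
          \<longrightarrow> (\<exists>l\<in>K. \<forall>\<epsilon>>0. \<exists>N. \<forall>n\<ge>N. nm (ca_diff C (f n) l) < \<epsilon>)))"

record ('x, 'a) hmod =
  hm_carrier :: "'x set"
  hm_zero :: 'x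
  hm_add :: "'x \<Rightarrow> 'x \<Rightarrow> 'x"
  hm_smult :: "complex \<Rightarrow> 'x \<Rightarrow> 'x"
  hm_ract :: "'x \<Rightarrow> 'a \<Rightarrow> 'x"
  hm_ip :: "'x \<Rightarrow> 'x \<Rightarrow> 'a"

definition hm_diff :: "('x, 'a) hmod \<Rightarrow> 'x \<Rightarrow> 'x \<Rightarrow> 'x" where
  "hm_diff X x y = hm_add X x (hm_smult X (-1) y)"

definition hm_sum :: "('x, 'a) hmod \<Rightarrow> 'x list \<Rightarrow> 'x" where
  "hm_sum X xs = foldr (hm_add X) xs (hm_zero X)"

definition hm_norm :: "'a calg \<Rightarrow> ('x, 'a) hmod \<Rightarrow> 'x \<Rightarrow> real" where
  "hm_norm A X x = sqrt (ca_norm A (hm_ip X x x))"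

definition right_hilbert_module :: "'a calg \<Rightarrow> ('x, 'a) hmod \<Rightarrow> bool" where
  "right_hilbert_module A X \<longleftrightarrow> unital_cstar_algebra A \<and>
     (let K = hm_carrier X; R = ca_carrier A; add = hm_add X; sm = hm_smult X;
          ra = hm_ract X; ip = hm_ip X; z = hm_zero X in
     z \<in> K \<and>
     (\<forall>x\<in>K. \<forall>y\<in>K. add x y \<in> K \<and> ip x y \<in> R) \<and>
     (\<forall>c. \<forall>x\<in>K. sm c x \<in> K) \<and> (\<forall>x\<in>K. \<forall>a\<in>R. ra x a \<in> K) \<and>
     \<comment> \<open>complex vector space\<close>
     (\<forall>x\<in>K. \<forall>y\<in>K. \<forall>w\<in>K. add (add x y) w = add x (add y w)) \<and>
     (\<forall>x\<in>K. \<forall>y\<in>K. add x y = add y x) \<and>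
     (\<forall>x\<in>K. add z x = x) \<and>
     (\<forall>x\<in>K. add x (sm (-1) x) = z) \<and>
     (\<forall>c d. \<forall>x\<in>K. sm (c + d) x = add (sm c x) (sm d x)) \<and>
     (\<forall>c. \<forall>x\<in>K. \<forall>y\<in>K. sm c (add x y) = add (sm c x) (sm c y)) \<and>
     (\<forall>c d. \<forall>x\<in>K. sm (c * d) x = sm c (sm d x)) \<and>
     (\<forall>x\<in>K. sm 1 x = x) \<and>
     \<comment> \<open>right A-module compatible with scalars\<close>
     (\<forall>x\<in>K. \<forall>a\<in>R. \<forall>b\<in>R. ra x (ca_mult A a b) = ra (ra x a) b) \<and>
     (\<forall>x\<in>K. \<forall>y\<in>K. \<forall>a\<in>R. ra (add x y) a = add (ra x a) (ra y a)) \<and>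
     (\<forall>x\<in>K. \<forall>a\<in>R. \<forall>b\<in>R. ra x (ca_add A a b) = add (ra x a) (ra x b)) \<and>
     (\<forall>c. \<forall>x\<in>K. \<forall>a\<in>R. ra (sm c x) a = sm c (ra x a) \<and> ra x (ca_smult A c a) = sm c (ra x a)) \<and>
     (\<forall>x\<in>K. ra x (ca_one A) = x) \<and>
     \<comment> \<open>A-valued inner product, linear in the second variable\<close>
     (\<forall>x\<in>K. \<forall>y\<in>K. \<forall>w\<in>K. ip x (add y w) = ca_add A (ip x y) (ip x w)) \<and>
     (\<forall>c. \<forall>x\<in>K. \<forall>y\<in>K. ip x (sm c y) = ca_smult A c (ip x y)) \<and>
     (\<forall>x\<in>K. \<forall>y\<in>K. \<forall>a\<in>R. ip x (ra y a) = ca_mult A (ip x y) a) \<and>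
     (\<forall>x\<in>K. \<forall>y\<in>K. ca_star A (ip x y) = ip y x) \<and>
     (\<forall>x\<in>K. \<exists>b\<in>R. ip x x = ca_mult A (ca_star A b) b) \<and>
     (\<forall>x\<in>K. ip x x = ca_zero A \<longrightarrow> x = z) \<and>
     \<comment> \<open>completeness w.r.t. the norm \<open>\<parallel>(x|x)\<parallel>^(1/2)\<close>\<close>
     (\<forall>f :: nat \<Rightarrow> _. (\<forall>n. f n \<in> K) \<and> (\<forall>\<epsilon>>0. \<exists>N. \<forall>m\<ge>N. \<forall>n\<ge>N. hm_norm A X (hm_diff X (f m) (f n)) < \<epsilon>)
          \<longrightarrow> (\<exists>l\<in>K. \<forall>\<epsilon>>0. \<exists>N. \<forall>n\<ge>N. hm_norm A X (hm_diff X (f n) l) < \<epsilon>)))"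

text \<open>The condition \<open>(\<phi>(a)x|y) = (x|\<phi>(a*)y)\<close> expresses that
  each \<open>\<phi>(a)\<close> is adjointable with adjoint \<open>\<phi>(a*)\<close> (so \<open>\<phi>\<close> is *-preserving).\<close>
definition hilbert_bimodule :: "'a calg \<Rightarrow> ('x, 'a) hmod \<Rightarrow> ('a \<Rightarrow> 'x \<Rightarrow> 'x) \<Rightarrow> bool" where
  "hilbert_bimodule A X \<phi> \<longleftrightarrow> right_hilbert_module A X \<and>
     (let K = hm_carrier X; R = ca_carrier A in
     (\<forall>a\<in>R. \<forall>x\<in>K. \<phi> a x \<in> K) \<and>
     (\<forall>a\<in>R. \<forall>x\<in>K. \<forall>y\<in>K. hm_ip X (\<phi> a x) y = hm_ip X x (\<phi> (ca_star A a) y)) \<and>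
     (\<forall>a\<in>R. \<forall>b\<in>R. \<forall>x\<in>K. \<phi> (ca_add A a b) x = hm_add X (\<phi> a x) (\<phi> b x)) \<and>
     (\<forall>c. \<forall>a\<in>R. \<forall>x\<in>K. \<phi> (ca_smult A c a) x = hm_smult X c (\<phi> a x)) \<and>
     (\<forall>a\<in>R. \<forall>b\<in>R. \<forall>x\<in>K. \<phi> (ca_mult A a b) x = \<phi> a (\<phi> b x)) \<and>
     (\<forall>a\<in>R. \<forall>b\<in>R. (\<forall>x\<in>K. \<phi> a x = \<phi> b x) \<longrightarrow> a = b))"

definition full_module :: "'a calg \<Rightarrow> ('x, 'a) hmod \<Rightarrow> bool" where
  "full_module A X \<longleftrightarrow>
     (\<forall>z\<in>ca_carrier A. \<forall>\<epsilon>>0. \<exists>l :: (complex \<times> 'x \<times> 'x) list.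
        (\<forall>(c, x, y)\<in>set l. x \<in> hm_carrier X \<and> y \<in> hm_carrier X) \<and>
        ca_norm A (ca_diff A z (ca_sum A (map (\<lambda>(c, x, y). ca_smult A c (hm_ip X x y)) l))) < \<epsilon>)"

definition is_basis :: "('x, 'a) hmod \<Rightarrow> 'x list \<Rightarrow> bool" where
  "is_basis X us \<longleftrightarrow> set us \<subseteq> hm_carrier X \<and>
     (\<forall>x\<in>hm_carrier X. x = hm_sum X (map (\<lambda>u. hm_ract X u (hm_ip X u x)) us))"

definition finite_projective :: "('x, 'a) hmod \<Rightarrow> bool" where
  "finite_projective X \<longleftrightarrow> (\<exists>us. is_basis X us)"

text \<open>\<open>OX\<close> is a unital C*-algebra containing a unital copy \<open>\<iota>(A)\<close> of A and
  elements \<open>S x\<close> satisfying the defining relations of \<open>O_X\<close> (w.r.t. the basis \<open>us\<close>).\<close>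
definition cp_relations ::
  "'a calg \<Rightarrow> ('x, 'a) hmod \<Rightarrow> ('a \<Rightarrow> 'x \<Rightarrow> 'x) \<Rightarrow> 'x list \<Rightarrow> 'o calg \<Rightarrow> ('a \<Rightarrow> 'o) \<Rightarrow> ('x \<Rightarrow> 'o) \<Rightarrow> bool" where
  "cp_relations A X \<phi> us OX \<iota> S \<longleftrightarrow> unital_cstar_algebra OX \<and>
     (let R = ca_carrier A; K = hm_carrier X in
     (\<forall>a\<in>R. \<iota> a \<in> ca_carrier OX) \<and>
     (\<forall>a\<in>R. \<forall>b\<in>R. \<iota> (ca_add A a b) = ca_add OX (\<iota> a) (\<iota> b)) \<and>
     (\<forall>c. \<forall>a\<in>R. \<iota> (ca_smult A c a) = ca_smult OX c (\<iota> a)) \<and>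
     (\<forall>a\<in>R. \<forall>b\<in>R. \<iota> (ca_mult A a b) = ca_mult OX (\<iota> a) (\<iota> b)) \<and>
     (\<forall>a\<in>R. \<iota> (ca_star A a) = ca_star OX (\<iota> a)) \<and>
     \<iota> (ca_one A) = ca_one OX \<and>
     (\<forall>x\<in>K. S x \<in> ca_carrier OX) \<and>
     (\<forall>x\<in>K. \<forall>y\<in>K. S (hm_add X x y) = ca_add OX (S x) (S y)) \<and>
     (\<forall>c. \<forall>x\<in>K. S (hm_smult X c x) = ca_smult OX c (S x)) \<and>
     (\<forall>x\<in>K. \<forall>a\<in>R. S (hm_ract X x a) = ca_mult OX (S x) (\<iota> a)) \<and>
     (\<forall>x\<in>K. \<forall>a\<in>R. S (\<phi> a x) = ca_mult OX (\<iota> a) (S x)) \<and>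
     (\<forall>x\<in>K. \<forall>y\<in>K. ca_mult OX (ca_star OX (S x)) (S y) = \<iota> (hm_ip X x y)) \<and>
     ca_sum OX (map (\<lambda>u. ca_mult OX (S u) (ca_star OX (S u))) us) = ca_one OX)"

definition commutant :: "'o calg \<Rightarrow> ('a \<Rightarrow> 'o) \<Rightarrow> 'a calg \<Rightarrow> 'o set" where
  "commutant OX \<iota> A = {T \<in> ca_carrier OX. \<forall>a\<in>ca_carrier A. ca_mult OX (\<iota> a) T = ca_mult OX T (\<iota> a)}"

definition sigma_map :: "'o calg \<Rightarrow> ('x \<Rightarrow> 'o) \<Rightarrow> 'x list \<Rightarrow> 'o \<Rightarrow> 'o" where
  "sigma_map OX S us T = ca_sum OX (map (\<lambda>u. ca_mult OX (ca_mult OX (S u) T) (ca_star OX (S u))) us)"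

end

theory Submission
  imports Defs
begin
primrec nsum :: "('a \<Rightarrow> 'a \<Rightarrow> 'a) \<Rightarrow> 'a \<Rightarrow> (nat \<Rightarrow> 'a) \<Rightarrow> nat \<Rightarrow> 'a" where
  "nsum f z p 0 = z"
| "nsum f z p (Suc n) = f (nsum f z p n) (p n)"

lemma geom_tail:
  fixes r :: real assumes "0 \<le> r" "r < 1" "n \<le> m"
  shows "(\<Sum>k\<in>{n..<m}. r^k) \<le> r^n / (1 - r)"
proof -
  have "(\<Sum>k\<in>{n..<m}. r^k) * (1 - r) = r^n - r^m" using assms(3)
  proof (induction m rule: dec_induct)
    case base then show ?case by simp
  next
    case (step k)
    have "(\<Sum>j\<in>{n..<Suc k}. r^j) * (1-r) = (\<Sum>j\<in>{n..<k}. r^j)*(1-r) + r^k - r^k * r"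
      using step(1) by (simp add: algebra_simps)
    then show ?case using step.IH by simp
  qed
  then have "(\<Sum>k\<in>{n..<m}. r^k) = (r^n - r^m) / (1 - r)" using assms by (simp add: field_simps)
  also have "\<dots> \<le> r^n / (1 - r)" using assms by (simp add: divide_right_mono)
  finally show ?thesis .
qed

locale ualg =
  fixes C :: "'a calg"
  assumes ax: "unital_cstar_algebra C"
begin

abbreviation "K \<equiv> ca_carrier C"
abbreviation "pl \<equiv> ca_add C"
abbreviation "ml \<equiv> ca_mult C"
abbreviation "sm \<equiv> ca_smult C"
abbreviation "st \<equiv> ca_star C"
abbreviation "nm \<equiv> ca_norm C"
abbreviation "zz \<equiv> ca_zero C"
abbreviation "ee \<equiv> ca_one C"

lemma z_in[simp]: "zz \<in> K" and e_in[simp]: "ee \<in> K"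
  and add_in[simp]: "x \<in> K \<Longrightarrow> y \<in> K \<Longrightarrow> pl x y \<in> K"
  and mul_in[simp]: "x \<in> K \<Longrightarrow> y \<in> K \<Longrightarrow> ml x y \<in> K"
  and sm_in[simp]: "x \<in> K \<Longrightarrow> sm c x \<in> K"
  and st_in[simp]: "x \<in> K \<Longrightarrow> st x \<in> K"
  and add_assoc: "x \<in> K \<Longrightarrow> y \<in> K \<Longrightarrow> w \<in> K \<Longrightarrow> pl (pl x y) w = pl x (pl y w)"
  and add_comm: "x \<in> K \<Longrightarrow> y \<in> K \<Longrightarrow> pl x y = pl y x"
  and add_z[simp]: "x \<in> K \<Longrightarrow> pl zz x = x"
  and add_neg: "x \<in> K \<Longrightarrow> pl x (sm (-1) x) = zz"
  and sm_add1: "x \<in> K \<Longrightarrow> sm (c + d) x = pl (sm c x) (sm d x)"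
  and sm_add2: "x \<in> K \<Longrightarrow> y \<in> K \<Longrightarrow> sm c (pl x y) = pl (sm c x) (sm c y)"
  and sm_sm: "x \<in> K \<Longrightarrow> sm (c * d) x = sm c (sm d x)"
  and sm_one[simp]: "x \<in> K \<Longrightarrow> sm 1 x = x"
  and mul_assoc: "x \<in> K \<Longrightarrow> y \<in> K \<Longrightarrow> w \<in> K \<Longrightarrow> ml (ml x y) w = ml x (ml y w)"
  and mul_add_l: "x \<in> K \<Longrightarrow> y \<in> K \<Longrightarrow> w \<in> K \<Longrightarrow> ml x (pl y w) = pl (ml x y) (ml x w)"
  and mul_add_r: "x \<in> K \<Longrightarrow> y \<in> K \<Longrightarrow> w \<in> K \<Longrightarrow> ml (pl x y) w = pl (ml x w) (ml y w)"
  and mul_sm_l: "x \<in> K \<Longrightarrow> y \<in> K \<Longrightarrow> ml (sm c x) y = sm c (ml x y)"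
  and mul_sm_r: "x \<in> K \<Longrightarrow> y \<in> K \<Longrightarrow> ml x (sm c y) = sm c (ml x y)"
  and mul_e_l[simp]: "x \<in> K \<Longrightarrow> ml ee x = x"
  and mul_e_r[simp]: "x \<in> K \<Longrightarrow> ml x ee = x"
  and st_st[simp]: "x \<in> K \<Longrightarrow> st (st x) = x"
  and st_add: "x \<in> K \<Longrightarrow> y \<in> K \<Longrightarrow> st (pl x y) = pl (st x) (st y)"
  and st_sm: "x \<in> K \<Longrightarrow> st (sm c x) = sm (cnj c) (st x)"
  and st_mul: "x \<in> K \<Longrightarrow> y \<in> K \<Longrightarrow> st (ml x y) = ml (st y) (st x)"
  and nm_nonneg: "x \<in> K \<Longrightarrow> nm x \<ge> 0"
  and nm_zero_iff: "x \<in> K \<Longrightarrow> nm x = 0 \<longleftrightarrow> x = zz"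
  and nm_tri: "x \<in> K \<Longrightarrow> y \<in> K \<Longrightarrow> nm (pl x y) \<le> nm x + nm y"
  and nm_sm: "x \<in> K \<Longrightarrow> nm (sm c x) = cmod c * nm x"
  and nm_mul: "x \<in> K \<Longrightarrow> y \<in> K \<Longrightarrow> nm (ml x y) \<le> nm x * nm y"
  by (insert ax[unfolded unital_cstar_algebra_def Let_def], auto)

lemma complete: "(\<forall>n. (f :: nat \<Rightarrow> 'a) n \<in> K) \<Longrightarrow> (\<forall>\<epsilon>>0. \<exists>N. \<forall>m\<ge>N. \<forall>n\<ge>N. nm (ca_diff C (f m) (f n)) < \<epsilon>)
          \<Longrightarrow> (\<exists>l\<in>K. \<forall>\<epsilon>>0. \<exists>N. \<forall>n\<ge>N. nm (ca_diff C (f n) l) < \<epsilon>)"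
proof -
  assume h: "\<forall>n. f n \<in> K" "\<forall>\<epsilon>>0. \<exists>N. \<forall>m\<ge>N. \<forall>n\<ge>N. nm (ca_diff C (f m) (f n)) < \<epsilon>"
  from ax[unfolded unital_cstar_algebra_def Let_def]
  have H: "\<forall>f :: nat \<Rightarrow> _. (\<forall>n. f n \<in> K) \<and> (\<forall>\<epsilon>>0. \<exists>N. \<forall>m\<ge>N. \<forall>n\<ge>N. nm (ca_diff C (f m) (f n)) < \<epsilon>)
          \<longrightarrow> (\<exists>l\<in>K. \<forall>\<epsilon>>0. \<exists>N. \<forall>n\<ge>N. nm (ca_diff C (f n) l) < \<epsilon>)"
    by (elim conjE) assumption
  show ?thesis by (rule H[rule_format, OF conjI[OF h]])
qed

lemma idem_z: "a \<in> K \<Longrightarrow> pl a a = a \<Longrightarrow> a = zz"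
proof -
  assume a: "a \<in> K" "pl a a = a"
  have "zz = pl a (sm (-1) a)" using add_neg a by simp
  also have "\<dots> = pl (pl a a) (sm (-1) a)" using a(2) by simp
  also have "\<dots> = pl a (pl a (sm (-1) a))" by (rule add_assoc) (simp_all add: a(1))
  also have "\<dots> = a" using a add_neg add_comm[of a zz] by simp
  finally show ?thesis by simp
qed

lemma add_z_r[simp]: "x \<in> K \<Longrightarrow> pl x zz = x"
  using add_comm add_z by simp

lemma mul_z_l[simp]: "x \<in> K \<Longrightarrow> ml zz x = zz"
  by (rule idem_z) (simp_all add: mul_add_r[symmetric])
lemma mul_z_r[simp]: "x \<in> K \<Longrightarrow> ml x zz = zz"
  by (rule idem_z) (simp_all add: mul_add_l[symmetric])
lemma sm_z[simp]: "sm c zz = zz"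
  by (rule idem_z) (simp_all add: sm_add2[symmetric])
lemma st_z[simp]: "st zz = zz"
  by (rule idem_z) (simp_all add: st_add[symmetric])

lemma sum_in[simp]: "(\<And>x. x \<in> set xs \<Longrightarrow> f x \<in> K) \<Longrightarrow> ca_sum C (map f xs) \<in> K"
  by (induction xs) (auto simp: ca_sum_def)

lemma sum_Cons[simp]: "ca_sum C (x # xs) = pl x (ca_sum C xs)"
  by (simp add: ca_sum_def)
lemma sum_Nil[simp]: "ca_sum C [] = zz"
  by (simp add: ca_sum_def)

lemma sum_mul_l: "a \<in> K \<Longrightarrow> (\<And>x. x \<in> set xs \<Longrightarrow> f x \<in> K) \<Longrightarrow>
   ml a (ca_sum C (map f xs)) = ca_sum C (map (\<lambda>x. ml a (f x)) xs)"
  by (induction xs) (auto simp: mul_add_l)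
lemma sum_mul_r: "a \<in> K \<Longrightarrow> (\<And>x. x \<in> set xs \<Longrightarrow> f x \<in> K) \<Longrightarrow>
   ml (ca_sum C (map f xs)) a = ca_sum C (map (\<lambda>x. ml (f x) a) xs)"
  by (induction xs) (auto simp: mul_add_r)
lemma sum_sm: "(\<And>x. x \<in> set xs \<Longrightarrow> f x \<in> K) \<Longrightarrow>
   sm c (ca_sum C (map f xs)) = ca_sum C (map (\<lambda>x. sm c (f x)) xs)"
  by (induction xs) (auto simp: sm_add2)
lemma sum_st: "(\<And>x. x \<in> set xs \<Longrightarrow> f x \<in> K) \<Longrightarrow>
   st (ca_sum C (map f xs)) = ca_sum C (map (\<lambda>x. st (f x)) xs)"
  by (induction xs) (auto simp: st_add)

lemma add_swap: "a \<in> K \<Longrightarrow> b \<in> K \<Longrightarrow> c \<in> K \<Longrightarrow> d \<in> K \<Longrightarrow>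
   pl (pl a b) (pl c d) = pl (pl a c) (pl b d)"
proof -
  assume h: "a \<in> K" "b \<in> K" "c \<in> K" "d \<in> K"
  have "pl (pl a b) (pl c d) = pl a (pl b (pl c d))" using h add_assoc by simp
  also have "pl b (pl c d) = pl c (pl b d)"
    using h add_assoc add_comm by (metis add_in)
  finally show ?thesis using h add_assoc by simp
qed

lemma sum_add: "(\<And>x. x \<in> set xs \<Longrightarrow> f x \<in> K) \<Longrightarrow> (\<And>x. x \<in> set xs \<Longrightarrow> g x \<in> K) \<Longrightarrow>
   ca_sum C (map (\<lambda>x. pl (f x) (g x)) xs) = pl (ca_sum C (map f xs)) (ca_sum C (map g xs))"
  by (induction xs) (auto simp: add_swap)

abbreviation "df \<equiv> ca_diff C"
lemma diff_in[simp]: "x \<in> K \<Longrightarrow> y \<in> K \<Longrightarrow> df x y \<in> K"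
  by (simp add: ca_diff_def)
lemma neg_neg[simp]: "x \<in> K \<Longrightarrow> sm (-1) (sm (-1) x) = x"
  using sm_sm[of x "-1" "-1"] by simp
lemma add_neg'[simp]: "x \<in> K \<Longrightarrow> pl (sm (-1) x) x = zz"
  using add_neg add_comm by simp
lemma add_neg''[simp]: "x \<in> K \<Longrightarrow> pl x (sm (-1) x) = zz"
  using add_neg by simp
lemma diff_self[simp]: "x \<in> K \<Longrightarrow> df x x = zz"
  by (simp add: ca_diff_def)
lemma diff_add_cancel: "a \<in> K \<Longrightarrow> b \<in> K \<Longrightarrow> pl (df a b) b = a"
  by (simp add: ca_diff_def add_assoc)
lemma diff_zz_eq: "a \<in> K \<Longrightarrow> b \<in> K \<Longrightarrow> df a b = zz \<Longrightarrow> a = b"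
  using diff_add_cancel[of a b] by simp
lemma mul_diff_l: "a \<in> K \<Longrightarrow> b \<in> K \<Longrightarrow> c \<in> K \<Longrightarrow> ml a (df b c) = df (ml a b) (ml a c)"
  by (simp add: ca_diff_def mul_add_l mul_sm_r)
lemma mul_diff_r: "a \<in> K \<Longrightarrow> b \<in> K \<Longrightarrow> c \<in> K \<Longrightarrow> ml (df b c) a = df (ml b a) (ml c a)"
  by (simp add: ca_diff_def mul_add_r mul_sm_l)
lemma diff_chain: "a \<in> K \<Longrightarrow> b \<in> K \<Longrightarrow> c \<in> K \<Longrightarrow> df c a = pl (df b a) (df c b)"
proof -
  assume h: "a \<in> K" "b \<in> K" "c \<in> K"
  have "pl (df b a) (df c b) = pl (pl b (sm (-1) a)) (pl c (sm (-1) b))" by (simp add: ca_diff_def)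
  also have "\<dots> = pl (pl b c) (pl (sm (-1) a) (sm (-1) b))" using h add_swap by simp
  also have "\<dots> = pl (pl c b) (pl (sm (-1) a) (sm (-1) b))" using h add_comm[of b c] by simp
  also have "\<dots> = pl (pl c (sm (-1) a)) (pl b (sm (-1) b))" using h by (intro add_swap) simp_all
  also have "\<dots> = df c a" using h by (simp add: ca_diff_def)
  finally show ?thesis by simp
qed
lemma diff_pl_left: "x \<in> K \<Longrightarrow> y \<in> K \<Longrightarrow> df (pl x y) x = y"
proof -
  assume h: "x \<in> K" "y \<in> K"
  have "df (pl x y) x = pl (pl y x) (sm (-1) x)" using h add_comm[of x y] by (simp add: ca_diff_def)
  also have "\<dots> = y" using h by (simp add: add_assoc)
  finally show ?thesis .
qed
lemma diff_diff_e: "a \<in> K \<Longrightarrow> p \<in> K \<Longrightarrow> df (df a p) a = sm (-1) p"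
proof -
  assume h: "a \<in> K" "p \<in> K"
  have "df (df a p) a = pl (pl (sm (-1) p) a) (sm (-1) a)" using h add_comm[of a "sm (-1) p"] by (simp add: ca_diff_def)
  also have "\<dots> = sm (-1) p" using h by (simp add: add_assoc)
  finally show ?thesis .
qed
lemma diff_diff: "a \<in> K \<Longrightarrow> x \<in> K \<Longrightarrow> df a (df a x) = x"
proof -
  assume h: "a \<in> K" "x \<in> K"
  have "df a (df a x) = pl a (pl (sm (-1) a) x)" using h by (simp add: ca_diff_def sm_add2)
  also have "\<dots> = x" using h by (simp add: add_assoc[symmetric])
  finally show ?thesis .
qed
lemma diff_swap: "a \<in> K \<Longrightarrow> b \<in> K \<Longrightarrow> df a b = sm (-1) (df b a)"
  by (simp add: ca_diff_def sm_add2 add_comm)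
lemma nm_diff_sym: "a \<in> K \<Longrightarrow> b \<in> K \<Longrightarrow> nm (df a b) = nm (df b a)"
  using diff_swap[of a b] nm_sm[of "df b a" "-1"] by simp
lemma nm_zz[simp]: "nm zz = 0" using nm_zero_iff by simp

lemma neumann:
  assumes w: "w \<in> K" and r1: "nm w < 1"
  shows "\<exists>v\<in>K. ml (df ee w) v = ee"
proof -
  define r where "r = nm w"
  define E where "E = nm ee"
  have r0: "0 \<le> r" using nm_nonneg w r_def by simp
  have E0: "0 \<le> E" using nm_nonneg E_def by simp
  have r1': "r < 1" using r1 r_def by simp
  define p where "p = (\<lambda>n. (ml w ^^ n) ee)"
  have pS: "p (Suc n) = ml w (p n)" for n by (simp add: p_def)
  have p0: "p 0 = ee" by (simp add: p_def)
  have p_in[simp]: "p n \<in> K" for n by (induction n) (simp_all add: p0 pS w)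
  have p_nm: "nm (p n) \<le> E * r^n" for n
  proof (induction n)
    case 0 then show ?case by (simp add: p0 E_def)
  next
    case (Suc n)
    have "nm (p (Suc n)) \<le> r * nm (p n)" using nm_mul[of w "p n"] w by (simp add: pS r_def)
    also have "\<dots> \<le> r * (E * r^n)" using Suc r0 by (simp add: mult_left_mono)
    finally show ?case by (simp add: algebra_simps)
  qed
  define s where "s = nsum pl zz p"
  have s0: "s 0 = zz" and sS: "s (Suc n) = pl (s n) (p n)" for n by (simp_all add: s_def)
  have s_in[simp]: "s n \<in> K" for n by (induction n) (simp_all add: s0 sS)
  have cb: "nm (df (s m) (s n)) \<le> (\<Sum>k\<in>{n..<m}. E * r^k)" if "n \<le> m" for n m
    using that
  proof (induction m rule: dec_induct)
    case base then show ?case by simp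
  next
    case (step k)
    have "df (s (Suc k)) (s n) = pl (df (s k) (s n)) (df (s (Suc k)) (s k))"
      by (rule diff_chain) simp_all
    also have "df (s (Suc k)) (s k) = p k" by (simp add: sS diff_pl_left)
    finally have "nm (df (s (Suc k)) (s n)) \<le> nm (df (s k) (s n)) + nm (p k)"
      using nm_tri by simp
    also have "\<dots> \<le> (\<Sum>j\<in>{n..<k}. E * r^j) + E * r^k" using step p_nm by (meson add_mono)
    finally show ?case using step by simp
  qed
  have cb2: "nm (df (s m) (s n)) \<le> E * r^N / (1 - r)" if "N \<le> n" "n \<le> m" for n m N
  proof -
    have "nm (df (s m) (s n)) \<le> E * (\<Sum>k\<in>{n..<m}. r^k)" using cb[OF that(2)] by (simp add: sum_distrib_left)
    also have "\<dots> \<le> E * (r^n / (1 - r))" using geom_tail[OF r0 r1' that(2)] E0 by (rule mult_left_mono)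
    also have "\<dots> \<le> E * (r^N / (1 - r))" using r0 r1' E0 that(1)
      by (intro mult_left_mono divide_right_mono power_decreasing) simp_all
    finally show ?thesis by simp
  qed
  have "\<exists>N. \<forall>m\<ge>N. \<forall>n\<ge>N. nm (df (s m) (s n)) < \<epsilon>" if eps: "\<epsilon> > 0" for \<epsilon>
  proof -
    obtain N where N: "r^N < \<epsilon> * (1 - r) / (E + 1)"
      using real_arch_pow_inv[of "\<epsilon> * (1 - r) / (E + 1)" r] eps r1' E0 by auto
    have key: "E * r^N / (1 - r) < \<epsilon>"
    proof -
      have "E * r^N \<le> (E + 1) * r^N" using r0 by (simp add: algebra_simps)
      also have "\<dots> < (E + 1) * (\<epsilon> * (1 - r) / (E + 1))" using N E0 by (intro mult_strict_left_mono) simp_all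
      also have "\<dots> = \<epsilon> * (1 - r)" using E0 by simp
      finally show ?thesis using r1' by (simp add: field_simps)
    qed
    show ?thesis
    proof (intro exI allI impI)
      fix m n assume mn: "N \<le> m" "N \<le> n"
      show "nm (df (s m) (s n)) < \<epsilon>"
      proof (cases "n \<le> m")
        case True then show ?thesis using cb2[OF mn(2) True] key by simp
      next
        case False
        then have "nm (df (s n) (s m)) \<le> E * r^N / (1 - r)" using cb2[OF mn(1)] by simp
        then show ?thesis using key nm_diff_sym[of "s m" "s n"] by simp
      qed
    qed
  qed
  then obtain v where v: "v \<in> K" and lim: "\<forall>\<epsilon>>0. \<exists>N. \<forall>n\<ge>N. nm (df (s n) v) < \<epsilon>"
    using complete[of s] by auto
  define z where "z = df ee w"
  have z_in[simp]: "z \<in> K" using w z_def by simp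
  have tel: "ml z (s n) = df ee (p n)" for n
  proof (induction n)
    case 0 then show ?case by (simp add: s0 p0)
  next
    case (Suc n)
    have "ml z (s (Suc n)) = pl (ml z (s n)) (ml z (p n))" by (simp add: sS mul_add_l)
    also have "ml z (p n) = df (p n) (p (Suc n))" using w by (simp add: z_def mul_diff_r pS)
    also have "ml z (s n) = df ee (p n)" by (rule Suc)
    also have "pl (df ee (p n)) (df (p n) (p (Suc n))) = df ee (p (Suc n))"
      using diff_chain[of "p (Suc n)" "p n" ee] add_comm by simp
    finally show ?case .
  qed
  define q where "q = ml z v"
  have q_in[simp]: "q \<in> K" using v q_def by simp
  have bnd: "nm (df q ee) \<le> nm z * nm (df (s n) v) + E * r^n" for n
  proof -
    have "df q ee = pl (df (ml z (s n)) ee) (df q (ml z (s n)))"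
      by (rule diff_chain) (simp_all add: v)
    also have "df q (ml z (s n)) = ml z (df v (s n))" using v by (simp add: q_def mul_diff_l)
    also have "df (ml z (s n)) ee = sm (-1) (p n)" by (simp add: tel diff_diff_e)
    finally have "nm (df q ee) \<le> nm (sm (-1) (p n)) + nm (ml z (df v (s n)))"
      using nm_tri v by simp
    also have "nm (sm (-1) (p n)) = nm (p n)" using nm_sm[of "p n" "-1"] by simp
    also have "nm (ml z (df v (s n))) \<le> nm z * nm (df v (s n))" using nm_mul v by simp
    also have "nm (df v (s n)) = nm (df (s n) v)" using nm_diff_sym v by simp
    finally show ?thesis using p_nm[of n] by simp
  qed
  have "nm (df q ee) = 0"
  proof (rule ccontr)
    assume "nm (df q ee) \<noteq> 0"
    then have d: "nm (df q ee) > 0" using nm_nonneg[of "df q ee"] by simp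
    define \<delta> where "\<delta> = nm (df q ee)"
    have zn: "0 \<le> nm z" using nm_nonneg by simp
    obtain N1 where N1: "\<forall>n\<ge>N1. nm (df (s n) v) < \<delta> / (2 * (nm z + 1))"
      using lim d zn \<delta>_def by (metis divide_pos_pos add_nonneg_pos zero_less_one mult_pos_pos zero_less_numeral)
    obtain N2 where N2: "r^N2 < \<delta> / (2 * (E + 1))"
      using real_arch_pow_inv[of "\<delta> / (2 * (E + 1))" r] d E0 r1' \<delta>_def by auto
    define n where "n = max N1 N2"
    have a1: "nm (df (s n) v) < \<delta> / (2 * (nm z + 1))" using N1 n_def by simp
    have a2: "r^n \<le> r^N2" using r0 r1' n_def by (intro power_decreasing) simp_all
    have "nm z * nm (df (s n) v) \<le> (nm z + 1) * nm (df (s n) v)"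
      using nm_nonneg[of "df (s n) v"] v by (simp add: algebra_simps)
    also have "\<dots> \<le> (nm z + 1) * (\<delta> / (2 * (nm z + 1)))"
      using a1 zn by (intro mult_left_mono) simp_all
    also have "\<dots> = \<delta> / 2" using zn by (simp add: field_simps)
    finally have b1: "nm z * nm (df (s n) v) \<le> \<delta> / 2" .
    have "E * r^n \<le> (E + 1) * r^N2" using a2 E0 r0
      by (intro mult_mono) simp_all
    also have "\<dots> < (E + 1) * (\<delta> / (2 * (E + 1)))" using N2 E0 by (intro mult_strict_left_mono) simp_all
    also have "\<dots> = \<delta> / 2" using E0 by (simp add: field_simps)
    finally have b2: "E * r^n < \<delta> / 2" .
    show False using bnd[of n] b1 b2 \<delta>_def by simp
  qed
  then have "q = ee" using nm_zero_iff[of "df q ee"] diff_zz_eq[of q ee] by simp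
  then show ?thesis using v unfolding q_def z_def by blast
qed

end
context ualg begin
lemma sum_cong: "(\<And>x. x \<in> set xs \<Longrightarrow> f x = g x) \<Longrightarrow> ca_sum C (map f xs) = ca_sum C (map g xs)"
  by (induction xs) auto
end

theorem lemma3p1:
  fixes A :: "'a calg" and X :: "('x, 'a) hmod" and \<phi> :: "'a \<Rightarrow> 'x \<Rightarrow> 'x"
    and us :: "'x list" and OX :: "'o calg" and \<iota> :: "'a \<Rightarrow> 'o" and S :: "'x \<Rightarrow> 'o"
  assumes "hilbert_bimodule A X \<phi>"
    and "full_module A X"
    and "finite_projective X"
    and "is_basis X us"
    and "cp_relations A X \<phi> us OX \<iota> S"
  shows "(\<forall>T\<in>commutant OX \<iota> A. sigma_map OX S us T \<in> ca_carrier OX)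
    \<and> (\<forall>T\<in>commutant OX \<iota> A. \<forall>T'\<in>commutant OX \<iota> A.
          sigma_map OX S us (ca_add OX T T') = ca_add OX (sigma_map OX S us T) (sigma_map OX S us T')
        \<and> sigma_map OX S us (ca_mult OX T T') = ca_mult OX (sigma_map OX S us T) (sigma_map OX S us T'))
    \<and> (\<forall>c. \<forall>T\<in>commutant OX \<iota> A. sigma_map OX S us (ca_smult OX c T) = ca_smult OX c (sigma_map OX S us T))
    \<and> (\<forall>T\<in>commutant OX \<iota> A. sigma_map OX S us (ca_star OX T) = ca_star OX (sigma_map OX S us T))
    \<and> sigma_map OX S us (ca_one OX) = ca_one OX
    \<and> inj_on (sigma_map OX S us) (commutant OX \<iota> A)
    \<and> (\<forall>vs. is_basis X vs \<longrightarrow> (\<forall>T\<in>commutant OX \<iota> A. sigma_map OX S vs T = sigma_map OX S us T))"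
proof -
  have RH: "right_hilbert_module A X" using assms(1) unfolding hilbert_bimodule_def by simp
  have CP: "cp_relations A X \<phi> us OX \<iota> S" by (rule assms(5))
  interpret O: ualg OX using CP unfolding cp_relations_def by (simp add: ualg_def)
  interpret Aa: ualg A using RH unfolding right_hilbert_module_def by (simp add: ualg_def)
  note RH' = RH[unfolded right_hilbert_module_def Let_def]
  note CP' = CP[unfolded cp_relations_def Let_def]
  let ?KX = "hm_carrier X"
  let ?R = "ca_carrier A"
  let ?ip = "hm_ip X"
  have hz: "hm_zero X \<in> ?KX" using RH' by (elim conjE) assumption
  have hadd0: "\<forall>x\<in>?KX. \<forall>y\<in>?KX. hm_add X x y \<in> ?KX \<and> ?ip x y \<in> ?R" using RH' by (elim conjE) assumption
  have hadd: "x \<in> ?KX \<Longrightarrow> y \<in> ?KX \<Longrightarrow> hm_add X x y \<in> ?KX" for x y using hadd0 by blast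
  have hip: "x \<in> ?KX \<Longrightarrow> y \<in> ?KX \<Longrightarrow> ?ip x y \<in> ?R" for x y using hadd0 by blast
  have hra0: "\<forall>x\<in>?KX. \<forall>a\<in>?R. hm_ract X x a \<in> ?KX" using RH' by (elim conjE) assumption
  have hra: "x \<in> ?KX \<Longrightarrow> a \<in> ?R \<Longrightarrow> hm_ract X x a \<in> ?KX" for x a using hra0 by blast
  have hz0: "\<forall>x\<in>?KX. hm_add X (hm_zero X) x = x" using RH' by (elim conjE) assumption
  have hzadd: "hm_add X (hm_zero X) (hm_zero X) = hm_zero X" using hz0 hz by blast
  have hipst0: "\<forall>x\<in>?KX. \<forall>y\<in>?KX. ca_star A (?ip x y) = ?ip y x" using RH' by (elim conjE) assumption
  have hipst: "x \<in> ?KX \<Longrightarrow> y \<in> ?KX \<Longrightarrow> ca_star A (?ip x y) = ?ip y x" for x y using hipst0 by blast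
  have io_in0: "\<forall>a\<in>?R. \<iota> a \<in> O.K" using CP' by (elim conjE) assumption
  have io_in: "a \<in> ?R \<Longrightarrow> \<iota> a \<in> O.K" for a using io_in0 by blast
  have io_add0: "\<forall>a\<in>?R. \<forall>b\<in>?R. \<iota> (ca_add A a b) = O.pl (\<iota> a) (\<iota> b)" using CP' by (elim conjE) assumption
  have io_add: "a \<in> ?R \<Longrightarrow> b \<in> ?R \<Longrightarrow> \<iota> (ca_add A a b) = O.pl (\<iota> a) (\<iota> b)" for a b using io_add0 by blast
  have io_sm0: "\<forall>c. \<forall>a\<in>?R. \<iota> (ca_smult A c a) = O.sm c (\<iota> a)" using CP' by (elim conjE) assumption
  have io_sm: "a \<in> ?R \<Longrightarrow> \<iota> (ca_smult A c a) = O.sm c (\<iota> a)" for a c using io_sm0 by blast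
  have io_mul0: "\<forall>a\<in>?R. \<forall>b\<in>?R. \<iota> (ca_mult A a b) = O.ml (\<iota> a) (\<iota> b)" using CP' by (elim conjE) assumption
  have io_mul: "a \<in> ?R \<Longrightarrow> b \<in> ?R \<Longrightarrow> \<iota> (ca_mult A a b) = O.ml (\<iota> a) (\<iota> b)" for a b using io_mul0 by blast
  have io_st0: "\<forall>a\<in>?R. \<iota> (ca_star A a) = O.st (\<iota> a)" using CP' by (elim conjE) assumption
  have io_st: "a \<in> ?R \<Longrightarrow> \<iota> (ca_star A a) = O.st (\<iota> a)" for a using io_st0 by blast
  have io_one: "\<iota> (ca_one A) = O.ee" using CP' by (elim conjE) assumption
  have S_in0: "\<forall>x\<in>?KX. S x \<in> O.K" using CP' by (elim conjE) assumption
  have S_in: "x \<in> ?KX \<Longrightarrow> S x \<in> O.K" for x using S_in0 by blast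
  have S_add0: "\<forall>x\<in>?KX. \<forall>y\<in>?KX. S (hm_add X x y) = O.pl (S x) (S y)" using CP' by (elim conjE) assumption
  have S_add: "x \<in> ?KX \<Longrightarrow> y \<in> ?KX \<Longrightarrow> S (hm_add X x y) = O.pl (S x) (S y)" for x y using S_add0 by blast
  have S_ra0: "\<forall>x\<in>?KX. \<forall>a\<in>?R. S (hm_ract X x a) = O.ml (S x) (\<iota> a)" using CP' by (elim conjE) assumption
  have S_ra: "x \<in> ?KX \<Longrightarrow> a \<in> ?R \<Longrightarrow> S (hm_ract X x a) = O.ml (S x) (\<iota> a)" for x a using S_ra0 by blast
  have S_ip0: "\<forall>x\<in>?KX. \<forall>y\<in>?KX. O.ml (O.st (S x)) (S y) = \<iota> (?ip x y)" using CP' by (elim conjE) assumption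
  have S_ip: "x \<in> ?KX \<Longrightarrow> y \<in> ?KX \<Longrightarrow> O.ml (O.st (S x)) (S y) = \<iota> (?ip x y)" for x y using S_ip0 by blast
  have Pu: "ca_sum OX (map (\<lambda>u. O.ml (S u) (O.st (S u))) us) = O.ee" using CP' by (elim conjE) assumption
  have usK: "set us \<subseteq> ?KX" using assms(4) unfolding is_basis_def by blast
  have S0: "S (hm_zero X) = O.zz"
    by (rule O.idem_z) (use S_in[OF hz] S_add[OF hz hz] hzadd in simp_all)
  have io0: "\<iota> (ca_zero A) = O.zz"
    by (rule O.idem_z) (use io_in[of "ca_zero A"] io_add[of "ca_zero A" "ca_zero A"] in simp_all)
  have hsum_in: "set xs \<subseteq> ?KX \<Longrightarrow> hm_sum X xs \<in> ?KX" for xs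
    by (induction xs) (auto simp: hm_sum_def hz hadd)
  have S_sum: "set xs \<subseteq> ?KX \<Longrightarrow> S (hm_sum X xs) = ca_sum OX (map S xs)" for xs
  proof (induction xs)
    case Nil then show ?case by (simp add: hm_sum_def S0)
  next
    case (Cons a xs)
    have "hm_sum X (a # xs) = hm_add X a (hm_sum X xs)" by (simp add: hm_sum_def)
    then show ?case using Cons hsum_in S_add by simp
  qed
  have E1: "S x = ca_sum OX (map (\<lambda>b. O.ml (S b) (\<iota> (?ip b x))) bs)"
    if bs: "is_basis X bs" and x: "x \<in> ?KX" for bs x
  proof -
    have bsK: "set bs \<subseteq> ?KX" using bs unfolding is_basis_def by blast
    have xe: "x = hm_sum X (map (\<lambda>u. hm_ract X u (?ip u x)) bs)" using bs x unfolding is_basis_def by blast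
    have "S x = S (hm_sum X (map (\<lambda>u. hm_ract X u (?ip u x)) bs))" using xe by (rule arg_cong)
    also have "\<dots> = ca_sum OX (map S (map (\<lambda>u. hm_ract X u (?ip u x)) bs))"
      by (rule S_sum) (use bsK x in \<open>auto intro!: hra hip\<close>)
    also have "\<dots> = ca_sum OX (map (\<lambda>b. O.ml (S b) (\<iota> (?ip b x))) bs)"
      unfolding map_map comp_def using bsK x by (intro O.sum_cong) (auto simp: S_ra hip)
    finally show ?thesis .
  qed
  have E2: "O.st (S x) = ca_sum OX (map (\<lambda>b. O.ml (\<iota> (?ip x b)) (O.st (S b))) bs)"
    if bs: "is_basis X bs" and x: "x \<in> ?KX" for bs x
  proof -
    have bsK: "set bs \<subseteq> ?KX" using bs unfolding is_basis_def by blast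
    have "O.st (S x) = ca_sum OX (map (\<lambda>b. O.st (O.ml (S b) (\<iota> (?ip b x)))) bs)"
      using E1[OF bs x] bsK x by (simp add: O.sum_st S_in io_in hip subset_iff)
    also have "\<dots> = ca_sum OX (map (\<lambda>b. O.ml (\<iota> (?ip x b)) (O.st (S b))) bs)"
      using bsK x by (intro O.sum_cong) (auto simp: O.st_mul S_in io_in hip io_st[symmetric] hipst subset_iff)
    finally show ?thesis .
  qed
  define \<sigma> where "\<sigma> = sigma_map OX S us"
  have sig: "\<sigma> T = ca_sum OX (map (\<lambda>u. O.ml (O.ml (S u) T) (O.st (S u))) us)" for T
    by (simp add: \<sigma>_def sigma_map_def)
  have comm: "T \<in> commutant OX \<iota> A \<longleftrightarrow> T \<in> O.K \<and> (\<forall>a\<in>?R. O.ml (\<iota> a) T = O.ml T (\<iota> a))" for T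
    by (simp add: commutant_def)
  have sig_in: "T \<in> O.K \<Longrightarrow> \<sigma> T \<in> O.K" for T
    unfolding sig by (rule O.sum_in) (use usK in \<open>auto simp: S_in\<close>)
  have KL: "O.ml (O.st (S x)) (\<sigma> T) = O.ml T (O.st (S x))"
    if T: "T \<in> commutant OX \<iota> A" and x: "x \<in> ?KX" for T x
  proof -
    have TK: "T \<in> O.K" and Tc: "\<And>a. a \<in> ?R \<Longrightarrow> O.ml (\<iota> a) T = O.ml T (\<iota> a)" using T comm by auto
    have "O.ml (O.st (S x)) (\<sigma> T) = ca_sum OX (map (\<lambda>u. O.ml (O.st (S x)) (O.ml (O.ml (S u) T) (O.st (S u)))) us)"
      unfolding sig using usK x TK by (intro O.sum_mul_l) (auto simp: S_in)
    also have "\<dots> = ca_sum OX (map (\<lambda>u. O.ml T (O.ml (\<iota> (?ip x u)) (O.st (S u)))) us)"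
    proof (intro O.sum_cong)
      fix u assume u: "u \<in> set us"
      then have uK: "u \<in> ?KX" using usK by auto
      have "O.ml (O.st (S x)) (O.ml (O.ml (S u) T) (O.st (S u))) = O.ml (O.ml (O.ml (O.st (S x)) (S u)) T) (O.st (S u))"
        using uK x TK by (simp add: O.mul_assoc S_in)
      also have "\<dots> = O.ml (O.ml T (\<iota> (?ip x u))) (O.st (S u))" using S_ip[OF x uK] Tc[OF hip[OF x uK]] by simp
      also have "\<dots> = O.ml T (O.ml (\<iota> (?ip x u)) (O.st (S u)))" using uK x TK by (simp add: O.mul_assoc S_in io_in hip)
      finally show "O.ml (O.st (S x)) (O.ml (O.ml (S u) T) (O.st (S u))) = O.ml T (O.ml (\<iota> (?ip x u)) (O.st (S u)))" .
    qed
    also have "\<dots> = O.ml T (ca_sum OX (map (\<lambda>u. O.ml (\<iota> (?ip x u)) (O.st (S u))) us))"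
      using usK x TK by (intro O.sum_mul_l[symmetric]) (auto simp: S_in io_in hip)
    also have "\<dots> = O.ml T (O.st (S x))" using E2[OF assms(4) x] by simp
    finally show ?thesis .
  qed
  have c1: "\<forall>T\<in>commutant OX \<iota> A. \<sigma> T \<in> O.K" using sig_in comm by auto
  have c2: "\<sigma> (O.pl T T') = O.pl (\<sigma> T) (\<sigma> T') \<and> \<sigma> (O.ml T T') = O.ml (\<sigma> T) (\<sigma> T')"
    if T: "T \<in> commutant OX \<iota> A" and T': "T' \<in> commutant OX \<iota> A" for T T'
  proof
    have TK: "T \<in> O.K" "T' \<in> O.K" using T T' comm by auto
    have "\<sigma> (O.pl T T') = ca_sum OX (map (\<lambda>u. O.pl (O.ml (O.ml (S u) T) (O.st (S u))) (O.ml (O.ml (S u) T') (O.st (S u)))) us)"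
      unfolding sig using usK TK by (intro O.sum_cong) (auto simp: S_in O.mul_add_l O.mul_add_r)
    also have "\<dots> = O.pl (\<sigma> T) (\<sigma> T')" unfolding sig using usK TK by (intro O.sum_add) (auto simp: S_in)
    finally show "\<sigma> (O.pl T T') = O.pl (\<sigma> T) (\<sigma> T')" .
    have "O.ml (\<sigma> T) (\<sigma> T') = ca_sum OX (map (\<lambda>u. O.ml (O.ml (O.ml (S u) T) (O.st (S u))) (\<sigma> T')) us)"
      unfolding sig[of T] using usK TK sig_in[of T'] by (intro O.sum_mul_r) (auto simp: S_in)
    also have "\<dots> = \<sigma> (O.ml T T')" unfolding sig[of "O.ml T T'"]
    proof (intro O.sum_cong)
      fix u assume u: "u \<in> set us"
      then have uK: "u \<in> ?KX" using usK by auto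
      have "O.ml (O.ml (O.ml (S u) T) (O.st (S u))) (\<sigma> T') = O.ml (S u) (O.ml T (O.ml (O.st (S u)) (\<sigma> T')))"
        using uK TK sig_in[of T'] by (simp add: O.mul_assoc S_in)
      also have "\<dots> = O.ml (S u) (O.ml T (O.ml T' (O.st (S u))))" using KL[OF T' uK] by simp
      also have "\<dots> = O.ml (O.ml (S u) (O.ml T T')) (O.st (S u))" using uK TK by (simp add: O.mul_assoc S_in)
      finally show "O.ml (O.ml (O.ml (S u) T) (O.st (S u))) (\<sigma> T') = O.ml (O.ml (S u) (O.ml T T')) (O.st (S u))" .
    qed
    finally show "\<sigma> (O.ml T T') = O.ml (\<sigma> T) (\<sigma> T')" by simp
  qed
  have c3: "\<sigma> (O.sm c T) = O.sm c (\<sigma> T)" if T: "T \<in> commutant OX \<iota> A" for T c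
  proof -
    have TK: "T \<in> O.K" using T comm by auto
    have "\<sigma> (O.sm c T) = ca_sum OX (map (\<lambda>u. O.sm c (O.ml (O.ml (S u) T) (O.st (S u)))) us)"
      unfolding sig using usK TK by (intro O.sum_cong) (auto simp: S_in O.mul_sm_l O.mul_sm_r)
    also have "\<dots> = O.sm c (\<sigma> T)" unfolding sig using usK TK by (intro O.sum_sm[symmetric]) (auto simp: S_in)
    finally show ?thesis .
  qed
  have c4: "\<sigma> (O.st T) = O.st (\<sigma> T)" if T: "T \<in> commutant OX \<iota> A" for T
  proof -
    have TK: "T \<in> O.K" using T comm by auto
    have "O.st (\<sigma> T) = ca_sum OX (map (\<lambda>u. O.st (O.ml (O.ml (S u) T) (O.st (S u)))) us)"
      unfolding sig using usK TK by (intro O.sum_st) (auto simp: S_in)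
    also have "\<dots> = \<sigma> (O.st T)" unfolding sig
      using usK TK by (intro O.sum_cong) (auto simp: S_in O.st_mul O.mul_assoc)
    finally show ?thesis by simp
  qed
  have c5: "\<sigma> O.ee = O.ee"
  proof -
    have "\<sigma> O.ee = ca_sum OX (map (\<lambda>u. O.ml (S u) (O.st (S u))) us)"
      unfolding sig using usK by (intro O.sum_cong) (auto simp: S_in)
    then show ?thesis using Pu by simp
  qed
  have c6: "inj_on \<sigma> (commutant OX \<iota> A)"
  proof (rule inj_onI)
    fix T T' assume T: "T \<in> commutant OX \<iota> A" and T': "T' \<in> commutant OX \<iota> A" and eq: "\<sigma> T = \<sigma> T'"
    have TK: "T \<in> O.K" "T' \<in> O.K" using T T' comm by auto
    have st_eq: "O.ml T (O.st (S x)) = O.ml T' (O.st (S x))" if x: "x \<in> ?KX" for x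
      using KL[OF T x] KL[OF T' x] eq by simp
    have ip_eq: "O.ml T (\<iota> (?ip x y)) = O.ml T' (\<iota> (?ip x y))" if x: "x \<in> ?KX" and y: "y \<in> ?KX" for x y
    proof -
      have "O.ml T (\<iota> (?ip x y)) = O.ml (O.ml T (O.st (S x))) (S y)"
        using S_ip[OF x y] x y TK by (simp add: O.mul_assoc S_in)
      also have "\<dots> = O.ml (O.ml T' (O.st (S x))) (S y)" using st_eq[OF x] by simp
      also have "\<dots> = O.ml T' (\<iota> (?ip x y))"
        using S_ip[OF x y] x y TK by (simp add: O.mul_assoc S_in)
      finally show ?thesis .
    qed
    let ?f = "\<lambda>(c, x, y). ca_smult A c (?ip x y)"
    have lsum: "ca_sum A (map ?f l) \<in> ?R \<and> O.ml T (\<iota> (ca_sum A (map ?f l))) = O.ml T' (\<iota> (ca_sum A (map ?f l)))"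
      if l: "\<forall>(c, x, y)\<in>set l. x \<in> ?KX \<and> y \<in> ?KX" for l
      using l
    proof (induction l)
      case Nil then show ?case using TK by (simp add: io0)
    next
      case (Cons a l)
      obtain c x y where a: "a = (c, x, y)" by (cases a) auto
      have xy: "x \<in> ?KX" "y \<in> ?KX" using Cons.prems a by auto
      have IH: "ca_sum A (map ?f l) \<in> ?R" "O.ml T (\<iota> (ca_sum A (map ?f l))) = O.ml T' (\<iota> (ca_sum A (map ?f l)))"
        using Cons by auto
      have fa: "?f a \<in> ?R" using a xy hip by simp
      have "O.ml T (\<iota> (ca_sum A (map ?f (a # l)))) = O.pl (O.sm c (O.ml T (\<iota> (?ip x y)))) (O.ml T (\<iota> (ca_sum A (map ?f l))))"
        using a xy IH TK hip io_in by (simp add: io_add io_sm O.mul_add_l O.mul_sm_r)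
      also have "\<dots> = O.pl (O.sm c (O.ml T' (\<iota> (?ip x y)))) (O.ml T' (\<iota> (ca_sum A (map ?f l))))"
        using ip_eq[OF xy] IH by simp
      also have "\<dots> = O.ml T' (\<iota> (ca_sum A (map ?f (a # l))))"
        using a xy IH TK hip io_in by (simp add: io_add io_sm O.mul_add_l O.mul_sm_r)
      finally show ?case using fa IH by simp
    qed
    obtain l where l: "\<forall>(c, x, y)\<in>set l. x \<in> ?KX \<and> y \<in> ?KX"
      and ln: "ca_norm A (ca_diff A (ca_one A) (ca_sum A (map ?f l))) < 1"
      using assms(2) unfolding full_module_def by (metis Aa.e_in zero_less_one)
    define zs where "zs = ca_sum A (map ?f l)"
    have zs: "zs \<in> ?R" "O.ml T (\<iota> zs) = O.ml T' (\<iota> zs)" using lsum[OF l] zs_def by auto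
    obtain v where v: "v \<in> ?R" and zv: "ca_mult A (ca_diff A (ca_one A) (ca_diff A (ca_one A) zs)) v = ca_one A"
      using Aa.neumann[of "ca_diff A (ca_one A) zs"] ln zs(1) zs_def by auto
    have zv': "ca_mult A zs v = ca_one A" using zv zs(1) by (simp add: Aa.diff_diff)
    have "T = O.ml T (\<iota> (ca_mult A zs v))" using zv' io_one TK by simp
    also have "\<dots> = O.ml (O.ml T (\<iota> zs)) (\<iota> v)" using zs v TK by (simp add: io_mul io_in O.mul_assoc[symmetric])
    also have "\<dots> = O.ml (O.ml T' (\<iota> zs)) (\<iota> v)" using zs by simp
    also have "\<dots> = O.ml T' (\<iota> (ca_mult A zs v))" using zs v TK by (simp add: io_mul io_in O.mul_assoc[symmetric])
    also have "\<dots> = T'" using zv' io_one TK by simp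
    finally show "T = T'" .
  qed
  have c7: "sigma_map OX S vs T = \<sigma> T" if vs: "is_basis X vs" and T: "T \<in> commutant OX \<iota> A" for vs T
  proof -
    have TK: "T \<in> O.K" using T comm by auto
    have vsK: "set vs \<subseteq> ?KX" using vs unfolding is_basis_def by blast
    define P where "P = ca_sum OX (map (\<lambda>b. O.ml (S b) (O.st (S b))) vs)"
    have P_in: "P \<in> O.K" unfolding P_def by (rule O.sum_in) (use vsK in \<open>auto simp: S_in\<close>)
    have PS: "O.ml P (S x) = S x" if x: "x \<in> ?KX" for x
    proof -
      have "O.ml P (S x) = ca_sum OX (map (\<lambda>b. O.ml (O.ml (S b) (O.st (S b))) (S x)) vs)"
        unfolding P_def using vsK x by (intro O.sum_mul_r) (auto simp: S_in)
      also have "\<dots> = ca_sum OX (map (\<lambda>b. O.ml (S b) (\<iota> (?ip b x))) vs)"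
        using vsK x by (intro O.sum_cong) (auto simp: S_in O.mul_assoc S_ip)
      also have "\<dots> = S x" using E1[OF vs x] by simp
      finally show ?thesis .
    qed
    have P1: "P = O.ee"
    proof -
      have "P = O.ml P O.ee" using P_in by simp
      also have "\<dots> = ca_sum OX (map (\<lambda>u. O.ml P (O.ml (S u) (O.st (S u)))) us)"
        unfolding Pu[symmetric] using usK P_in by (intro O.sum_mul_l) (auto simp: S_in)
      also have "\<dots> = ca_sum OX (map (\<lambda>u. O.ml (S u) (O.st (S u))) us)"
        using usK P_in by (intro O.sum_cong) (auto simp: S_in O.mul_assoc[symmetric] PS)
      also have "\<dots> = O.ee" by (rule Pu)
      finally show ?thesis .
    qed
    have "sigma_map OX S vs T = ca_sum OX (map (\<lambda>b. O.ml (O.ml (S b) (O.st (S b))) (\<sigma> T)) vs)"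
      unfolding sigma_map_def
    proof (intro O.sum_cong)
      fix b assume "b \<in> set vs"
      then have bK: "b \<in> ?KX" using vsK by auto
      have "O.ml (O.ml (S b) T) (O.st (S b)) = O.ml (S b) (O.ml T (O.st (S b)))"
        using bK TK by (simp add: O.mul_assoc S_in)
      also have "\<dots> = O.ml (S b) (O.ml (O.st (S b)) (\<sigma> T))" using KL[OF T bK] by simp
      also have "\<dots> = O.ml (O.ml (S b) (O.st (S b))) (\<sigma> T)" using bK TK sig_in by (simp add: O.mul_assoc S_in)
      finally show "O.ml (O.ml (S b) T) (O.st (S b)) = O.ml (O.ml (S b) (O.st (S b))) (\<sigma> T)" .
    qed
    also have "\<dots> = O.ml P (\<sigma> T)"
      unfolding P_def using vsK TK sig_in by (intro O.sum_mul_r[symmetric]) (auto simp: S_in)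
    also have "\<dots> = \<sigma> T" using P1 TK sig_in by simp
    finally show ?thesis .
  qed
  show ?thesis unfolding \<sigma>_def[symmetric] using c1 c2 c3 c4 c5 c6 c7 by blast
qed
end
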